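(* Let $p\ge3$ be a prime. (1) $\displaystyle \mathrm{ord}_p(\overline{F}_{p^2-1})=\sum_{k=1}^{p-1}\mu(k)\,\mathrm{ord}_p\big(\overline{G}_{\lfloor (p^2-1)/k\rfloor}\big).$ (2) For $1\le k\le p-1$ write $\lfloor (p^2-1)/k\rfloor=a_kp+b_k$ with $0\le a_k,b_k\le p-1$. Then $\mathrm{ord}_p\big(\overline{G}_{\lfloor (p^2-1)/k\rfloor}\big)=a_k(p-1-b_k)$, where $a_k=\lfloor (p-1)/k\rfloor$ and $b_k=\lfloor (p^2-1)/k\rfloor-p\lfloor (p-1)/k\rfloor$. (3) $\displaystyle \mathrm{ord}_p(\overline{F}_{p^2-1})=(p-1)-\sum_{k=1}^{p-1}\mu(k)\Big\lfloor\frac{p-1}{k}\Big\rfloor b_k.$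
   Context: For a positive integer $m$, $\overline{F}_m=\Big(\prod_{1\le h\le k\le m,\ \gcd(h,k)=1}\frac{h}{k}\Big)^{-1}$ (reciprocal of the product of all nonzero Farey fractions of order $m$) and $\overline{G}_m=\Big(\prod_{1\le h\le k\le m}\frac{h}{k}\Big)^{-1}$ (reciprocal of the product of all reduced and unreduced fractions $h/k$ with $1\le h\le k\le m$). For a nonzero rational $x$, $\mathrm{ord}_p(x)$ is the exponent of $p$ in $x$. $\mu$ is the M\"obius function. *)

theory Defs
  imports "HOL-Computational_Algebra.Computational_Algebra"
begin

definition moebius :: "nat \<Rightarrow> int" where
  "moebius n = (if n = 0 then 0
     else if squarefree n then (-1) ^ card (prime_factors n) else 0)"

definition ordp :: "nat \<Rightarrow> rat \<Rightarrow> int" where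
  "ordp p x = (case quotient_of x of (a, b) \<Rightarrow>
       int (multiplicity (int p) a) - int (multiplicity (int p) b))"

text \<open>Reciprocal of the product of the nonzero Farey fractions of order m.\<close>
definition Fbar :: "nat \<Rightarrow> rat" where
  "Fbar m = inverse (\<Prod>(h, k) \<in> {(h, k). 1 \<le> h \<and> h \<le> k \<and> k \<le> m \<and> coprime h k}.
                       of_nat h / of_nat k)"

definition Gbar :: "nat \<Rightarrow> rat" where
  "Gbar m = inverse (\<Prod>(h, k) \<in> {(h, k). 1 \<le> h \<and> h \<le> k \<and> k \<le> m}.
                       of_nat h / of_nat k)"

end

theory Submission
  imports Defs
begin


lemma ordp_frac:
  assumes "prime p" "a \<noteq> 0" "b \<noteq> 0"
  shows "ordp p (of_int a / of_int b) = int (multiplicity (int p) a) - int (multiplicity (int p) b)"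
proof -
  obtain c e where q: "quotient_of (of_int a / of_int b) = (c, e)" by (cases "quotient_of (of_int a / of_int b)")
  have e: "e > 0" using quotient_of_denom_pos[OF q] .
  have eq: "(of_int a / of_int b :: rat) = of_int c / of_int e" using quotient_of_div[OF q] .
  hence "(of_int (a * e) :: rat) = of_int (c * b)" using assms e by (simp add: field_simps)
  hence ae: "a * e = c * b" by (simp only: of_int_eq_iff)
  have c: "c \<noteq> 0" using ae assms e by auto
  have pe: "prime_elem (int p)" using assms(1) by simp
  have "multiplicity (int p) (a * e) = multiplicity (int p) (c * b)" using ae by simp
  hence "multiplicity (int p) a + multiplicity (int p) e = multiplicity (int p) c + multiplicity (int p) b"
    using pe assms c e by (simp add: prime_elem_multiplicity_mult_distrib)
  thus ?thesis by (simp add: ordp_def q)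
qed

definition W :: "nat \<Rightarrow> nat \<Rightarrow> nat \<Rightarrow> int" where
  "W p h k = int (multiplicity (int p) (int k)) - int (multiplicity (int p) (int h))"

lemma ordp_prod:
  assumes "prime p" "finite S" "\<And>h k. (h, k) \<in> S \<Longrightarrow> h \<ge> 1 \<and> k \<ge> 1"
  shows "ordp p (inverse (\<Prod>(h, k) \<in> S. of_nat h / of_nat k)) = (\<Sum>(h, k) \<in> S. W p h k)"
proof -
  have "(\<Prod>(h, k) \<in> S. (of_nat h / of_nat k :: rat)) = (\<Prod>x \<in> S. of_int (int (fst x)) / of_int (int (snd x)))"
    by (simp add: case_prod_beta)
  also have "\<dots> = of_int (\<Prod>x \<in> S. int (fst x)) / of_int (\<Prod>x \<in> S. int (snd x))"
    by (simp add: prod_dividef)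
  finally have P: "inverse (\<Prod>(h, k) \<in> S. (of_nat h / of_nat k :: rat)) = of_int (\<Prod>x \<in> S. int (snd x)) / of_int (\<Prod>x \<in> S. int (fst x))"
    by simp
  have nz1: "0 \<notin> (\<lambda>x. int (fst x)) ` S" and nz2: "0 \<notin> (\<lambda>x. int (snd x)) ` S"
    using assms(3) by force+
  have pe: "prime_elem (int p)" using assms(1) by simp
  have n1: "(\<Prod>x \<in> S. int (fst x)) \<noteq> 0" and n2: "(\<Prod>x \<in> S. int (snd x)) \<noteq> 0"
    using nz1 nz2 assms(2) by (simp_all add: prod_zero_iff, force+)
  have m1: "multiplicity (int p) (\<Prod>x \<in> S. int (fst x)) = (\<Sum>x\<in>S. multiplicity (int p) (int (fst x)))"
    using prime_elem_multiplicity_prod_distrib[OF pe nz1 assms(2)] .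
  have m2: "multiplicity (int p) (\<Prod>x \<in> S. int (snd x)) = (\<Sum>x\<in>S. multiplicity (int p) (int (snd x)))"
    using prime_elem_multiplicity_prod_distrib[OF pe nz2 assms(2)] .
  have "ordp p (inverse (\<Prod>(h, k) \<in> S. of_nat h / of_nat k)) =
     int (\<Sum>x\<in>S. multiplicity (int p) (int (snd x))) - int (\<Sum>x\<in>S. multiplicity (int p) (int (fst x)))"
    unfolding P ordp_frac[OF assms(1) n2 n1] m1 m2 ..
  also have "\<dots> = (\<Sum>(h, k) \<in> S. W p h k)"
    by (simp add: W_def case_prod_beta sum_subtractf)
  finally show ?thesis .
qed


lemma moebius_mult_prime:
  assumes q: "prime q" and nd: "\<not> q dvd e" and e: "e > 0"
  shows "moebius (q * e) = - moebius e"
proof -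
  have cop: "coprime q e" using q nd by (simp add: prime_imp_coprime)
  have sq: "squarefree (q * e) \<longleftrightarrow> squarefree e"
    using squarefree_multD(2)[of q e] squarefree_mult_coprime[OF cop squarefree_prime[OF q]] by blast
  have pf: "prime_factors (q * e) = insert q (prime_factors e)"
    using q e by (simp add: prime_factors_product prime_prime_factors)
  have qn: "q \<notin> prime_factors e" using nd by auto
  have card: "card (prime_factors (q * e)) = Suc (card (prime_factors e))"
    using pf qn by simp
  show ?thesis using q e sq card by (simp add: moebius_def)
qed

lemma moebius_sq:
  assumes "q ^ 2 dvd d" "\<not> q dvd 1"
  shows "moebius d = 0"
  using not_squarefreeI[OF assms] by (simp add: moebius_def)

lemma moebius_sum:
  assumes n: "n > (1::nat)"
  shows "(\<Sum>d\<in>{d. d dvd n}. moebius d) = 0"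
proof -
  obtain q where q: "prime q" "q dvd n" using prime_factor_nat[of n] n by auto
  define m where "m = n div q"
  have nm: "n = q * m" using q(2) by (simp add: m_def)
  have m0: "m > 0" using nm n by (cases m) auto
  have q1: "q > 1" using q(1) prime_gt_1_nat by blast
  define D where "D = {d. d dvd n}"
  define E where "E = {e. e dvd m \<and> \<not> q dvd e}"
  have finD: "finite D" using n by (simp add: D_def)
  have finE: "finite E" using m0 by (simp add: E_def)
  have A: "D - {d. q dvd d} = E"
  proof (auto simp: D_def E_def)
    fix d assume "d dvd n" "\<not> q dvd d"
    hence "coprime q d" using q(1) by (simp add: prime_imp_coprime)
    hence "coprime d q" by (simp add: coprime_commute)
    thus "d dvd m" using \<open>d dvd n\<close> nm by (simp add: coprime_dvd_mult_right_iff)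
  next
    fix d assume "d dvd m" thus "d dvd n" using nm by simp
  qed
  have C0: "(\<Sum>d\<in>(D \<inter> {d. q dvd d}) \<inter> {d. q^2 dvd d}. moebius d) = 0"
    using q1 by (intro sum.neutral) (auto intro!: moebius_sq)
  have BC: "(D \<inter> {d. q dvd d}) - {d. q^2 dvd d} = (\<lambda>e. q * e) ` E"
  proof (intro set_eqI iffI)
    fix d assume "d \<in> (D \<inter> {d. q dvd d}) - {d. q^2 dvd d}"
    hence d: "d dvd n" "q dvd d" "\<not> q^2 dvd d" by (auto simp: D_def)
    then obtain e where de: "d = q * e" by (auto elim: dvdE)
    have "\<not> q dvd e" using d(3) de by (auto simp: power2_eq_square)
    moreover have "e dvd m" using d(1) de nm q1 by simp
    ultimately show "d \<in> (\<lambda>e. q * e) ` E" using de by (auto simp: E_def)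
  next
    fix d assume "d \<in> (\<lambda>e. q * e) ` E"
    then obtain e where e: "d = q * e" "e dvd m" "\<not> q dvd e" by (auto simp: E_def)
    have "\<not> q^2 dvd d" using e q1 by (simp add: power2_eq_square)
    thus "d \<in> (D \<inter> {d. q dvd d}) - {d. q^2 dvd d}" using e nm by (auto simp: D_def)
  qed
  have inj: "inj_on (\<lambda>e. q * e) E" using q1 by (auto simp: inj_on_def)
  have "(\<Sum>d\<in>D. moebius d) = (\<Sum>d\<in>D \<inter> {d. q dvd d}. moebius d) + (\<Sum>d\<in>D - {d. q dvd d}. moebius d)"
    using finD by (rule sum.Int_Diff)
  also have "(\<Sum>d\<in>D \<inter> {d. q dvd d}. moebius d) =
     (\<Sum>d\<in>(D \<inter> {d. q dvd d}) \<inter> {d. q^2 dvd d}. moebius d) + (\<Sum>d\<in>(D \<inter> {d. q dvd d}) - {d. q^2 dvd d}. moebius d)"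
    using finD by (intro sum.Int_Diff) simp
  also have "\<dots> = (\<Sum>e\<in>E. moebius (q * e))"
    unfolding C0 BC using sum.reindex[OF inj, of moebius] by simp
  also have "\<dots> = (\<Sum>e\<in>E. - moebius e)"
  proof (intro sum.cong refl)
    fix x assume "x \<in> E"
    hence "x dvd m" "\<not> q dvd x" by (auto simp: E_def)
    moreover have "x > 0" using dvd_pos_nat[OF m0 \<open>x dvd m\<close>] .
    ultimately show "moebius (q * x) = - moebius x" using q(1) by (simp add: moebius_mult_prime)
  qed
  finally show ?thesis unfolding A by (simp add: D_def sum_negf)
qed

lemma moebius_sum_ivl:
  assumes "g \<ge> (1::nat)" "g \<le> N"
  shows "(\<Sum>d\<in>{1..N}. if d dvd g then moebius d else 0) = (if g = 1 then 1 else 0)"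
proof -
  have "(\<Sum>d\<in>{1..N}. if d dvd g then moebius d else 0) = (\<Sum>d\<in>{1..N} \<inter> {d. d dvd g}. moebius d)"
    by (simp add: sum.inter_restrict)
  also have "{1..N} \<inter> {d. d dvd g} = {d. d dvd g}"
  proof (intro set_eqI iffI)
    fix x assume "x \<in> {d. d dvd g}"
    hence "x dvd g" by simp
    moreover have "g > 0" using assms by simp
    ultimately have "x > 0" "x \<le> g" using dvd_pos_nat dvd_imp_le by blast+
    thus "x \<in> {1..N} \<inter> {d. d dvd g}" using assms \<open>x dvd g\<close> by auto
  qed auto
  also have "(\<Sum>d\<in>{d. d dvd g}. moebius d) = (if g = 1 then 1 else 0)"
    using moebius_sum[of g] assms by (cases "g = 1") (auto simp: moebius_def)
  finally show ?thesis .
qed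

lemma moebius_floor_sum:
  assumes "n \<ge> (1::nat)"
  shows "(\<Sum>k = 1..n. moebius k * int (n div k)) = 1"
proof -
  have c: "n div k = card ({1..n} \<inter> {j. k dvd j})" if "k \<ge> 1" for k
  proof -
    have "{1..n} \<inter> {j. k dvd j} = (\<lambda>i. k * i) ` {1..n div k}"
      using that by (auto simp: image_iff less_eq_div_iff_mult_less_eq mult.commute elim!: dvdE)
    moreover have "inj_on (\<lambda>i. k * i) {1..n div k}" using that by (auto simp: inj_on_def)
    ultimately show ?thesis by (simp add: card_image)
  qed
  have "(\<Sum>k = 1..n. moebius k * int (n div k)) = (\<Sum>k = 1..n. \<Sum>j = 1..n. if k dvd j then moebius k else 0)"
  proof (intro sum.cong refl)
    fix k assume "k \<in> {1..n}"
    hence "k \<ge> 1" by simp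
    have "(\<Sum>j = 1..n. if k dvd j then moebius k else 0) = (\<Sum>j \<in> {1..n} \<inter> {j. k dvd j}. moebius k)"
      by (simp only: sum.inter_restrict[OF finite_atLeastAtMost] mem_Collect_eq)
    also have "\<dots> = moebius k * int (card ({1..n} \<inter> {j. k dvd j}))" by simp
    finally show "moebius k * int (n div k) = (\<Sum>j = 1..n. if k dvd j then moebius k else 0)"
      using c[OF \<open>k \<ge> 1\<close>] by simp
  qed
  also have "\<dots> = (\<Sum>j = 1..n. \<Sum>k = 1..n. if k dvd j then moebius k else 0)"
    by (rule sum.swap)
  also have "\<dots> = (\<Sum>j = 1..n. if j = 1 then 1 else 0)"
  proof (intro sum.cong refl)
    fix j assume "j \<in> {1..n}"
    thus "(\<Sum>k = 1..n. if k dvd j then moebius k else 0) = (if j = 1 then 1 else 0)"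
      using moebius_sum_ivl[of j n] by simp
  qed
  also have "\<dots> = 1" using assms by simp
  finally show ?thesis .
qed


definition PS :: "nat \<Rightarrow> (nat \<times> nat) set" where
  "PS m = {(h, k). 1 \<le> h \<and> h \<le> k \<and> k \<le> m}"

lemma finite_PS: "finite (PS m)"
  by (rule finite_subset[of _ "{1..m} \<times> {1..m}"]) (auto simp: PS_def)

lemma W_scale:
  assumes "prime p" "d > 0" "h > 0" "k > 0"
  shows "W p (d * h) (d * k) = W p h k"
proof -
  have pe: "prime_elem (int p)" using assms(1) by simp
  show ?thesis using assms
    by (simp add: W_def prime_elem_multiplicity_mult_distrib[OF pe])
qed

lemma PS_scale:
  assumes "d > 0"
  shows "PS N \<inter> {x. d dvd fst x \<and> d dvd snd x} = (\<lambda>x. (d * fst x, d * snd x)) ` PS (N div d)"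
proof (intro set_eqI iffI)
  fix x assume x: "x \<in> PS N \<inter> {x. d dvd fst x \<and> d dvd snd x}"
  obtain h k where hk: "x = (h, k)" by (cases x)
  from x hk obtain a b where ab: "h = d * a" "k = d * b" by (auto elim!: dvdE)
  have "(a, b) \<in> PS (N div d)" using x hk ab assms
    by (auto simp: PS_def less_eq_div_iff_mult_less_eq mult.commute)
  thus "x \<in> (\<lambda>x. (d * fst x, d * snd x)) ` PS (N div d)" using hk ab by force
next
  fix x assume "x \<in> (\<lambda>x. (d * fst x, d * snd x)) ` PS (N div d)"
  then obtain y where y: "x = (d * fst y, d * snd y)" "y \<in> PS (N div d)" by auto
  obtain a b where "y = (a, b)" by (cases y)
  with y have x: "x = (d * a, d * b)" "(a, b) \<in> PS (N div d)" by auto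
  thus "x \<in> PS N \<inter> {x. d dvd fst x \<and> d dvd snd x}" using assms
    by (auto simp: PS_def less_eq_div_iff_mult_less_eq mult.commute)
qed

lemma inversion:
  assumes p: "prime p"
  shows "(\<Sum>x\<in>PS N \<inter> {x. coprime (fst x) (snd x)}. W p (fst x) (snd x)) =
         (\<Sum>d = 1..N. moebius d * (\<Sum>x\<in>PS (N div d). W p (fst x) (snd x)))"
proof -
  have "(\<Sum>x\<in>PS N \<inter> {x. coprime (fst x) (snd x)}. W p (fst x) (snd x)) =
        (\<Sum>x\<in>PS N. W p (fst x) (snd x) * (if gcd (fst x) (snd x) = 1 then 1 else 0))"
    by (simp add: sum.inter_restrict[OF finite_PS] coprime_iff_gcd_eq_1 if_distrib cong: if_cong)
  also have "\<dots> = (\<Sum>x\<in>PS N. \<Sum>d = 1..N. if d dvd fst x \<and> d dvd snd x then moebius d * W p (fst x) (snd x) else 0)"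
  proof (intro sum.cong refl)
    fix x assume x: "x \<in> PS N"
    have g1: "gcd (fst x) (snd x) \<ge> 1" using x by (auto simp: PS_def Suc_le_eq)
    have g2: "gcd (fst x) (snd x) \<le> N" using x
      by (auto simp: PS_def intro: order.trans[OF gcd_le2_nat])
    have "W p (fst x) (snd x) * (if gcd (fst x) (snd x) = 1 then 1 else 0) =
          W p (fst x) (snd x) * (\<Sum>d = 1..N. if d dvd gcd (fst x) (snd x) then moebius d else 0)"
      using moebius_sum_ivl[OF g1 g2] by simp
    also have "\<dots> = (\<Sum>d = 1..N. if d dvd fst x \<and> d dvd snd x then moebius d * W p (fst x) (snd x) else 0)"
      by (subst sum_distrib_left) (intro sum.cong refl, simp add: mult.commute)
    finally show "W p (fst x) (snd x) * (if gcd (fst x) (snd x) = 1 then 1 else 0) = \<dots>" .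
  qed
  also have "\<dots> = (\<Sum>d = 1..N. \<Sum>x\<in>PS N. if d dvd fst x \<and> d dvd snd x then moebius d * W p (fst x) (snd x) else 0)"
    by (rule sum.swap)
  also have "\<dots> = (\<Sum>d = 1..N. moebius d * (\<Sum>x\<in>PS (N div d). W p (fst x) (snd x)))"
  proof (intro sum.cong refl)
    fix d assume "d \<in> {1..N}"
    hence d: "d > 0" by simp
    have inj: "inj_on (\<lambda>x. (d * fst x, d * snd x)) (PS (N div d))"
      using d by (auto simp: inj_on_def prod_eq_iff)
    have "(\<Sum>x\<in>PS N. if d dvd fst x \<and> d dvd snd x then moebius d * W p (fst x) (snd x) else 0) =
          (\<Sum>x\<in>PS N \<inter> {x. d dvd fst x \<and> d dvd snd x}. moebius d * W p (fst x) (snd x))"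
      by (simp only: sum.inter_restrict[OF finite_PS] mem_Collect_eq)
    also have "\<dots> = (\<Sum>x\<in>PS (N div d). moebius d * W p (d * fst x) (d * snd x))"
      unfolding PS_scale[OF d] by (subst sum.reindex[OF inj]) simp
    also have "\<dots> = (\<Sum>x\<in>PS (N div d). moebius d * W p (fst x) (snd x))"
      using p d by (intro sum.cong refl) (auto simp: PS_def W_scale)
    also have "\<dots> = moebius d * (\<Sum>x\<in>PS (N div d). W p (fst x) (snd x))"
      by (simp add: sum_distrib_left)
    finally show "(\<Sum>x\<in>PS N. if d dvd fst x \<and> d dvd snd x then moebius d * W p (fst x) (snd x) else 0) = \<dots>" .
  qed
  finally show ?thesis .
qed


lemma mult_small:
  assumes p: "prime p" and n: "0 < n" "n < p^2"
  shows "multiplicity (int p) (int n) = (if p dvd n then 1 else 0)"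
proof (cases "p dvd n")
  case True
  have "\<not> p^2 dvd n" using n by (auto dest: dvd_imp_le)
  hence "\<not> int p ^ 2 dvd int n" by (metis of_nat_dvd_iff of_nat_power)
  hence "\<not> int p ^ Suc 1 dvd int n" by (simp add: numeral_2_eq_2)
  moreover have "int p ^ 1 dvd int n" using True by simp
  ultimately show ?thesis using True multiplicity_eqI by metis
next
  case False
  hence "\<not> int p dvd int n" by simp
  thus ?thesis using False by (simp add: not_dvd_imp_multiplicity_0)
qed

lemma Vsum:
  assumes p: "prime p"
  shows "n < p^2 \<Longrightarrow> (\<Sum>h = 1..n. int (multiplicity (int p) (int h))) = int (n div p)"
proof (induction n)
  case 0 thus ?case by simp
next
  case (Suc n)
  have "(\<Sum>h = 1..Suc n. int (multiplicity (int p) (int h))) =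
        (\<Sum>h = 1..n. int (multiplicity (int p) (int h))) + int (multiplicity (int p) (int (Suc n)))"
    by simp
  also have "\<dots> = int (n div p) + (if p dvd Suc n then 1 else 0)"
    using Suc mult_small[OF p, of "Suc n"] by simp
  also have "\<dots> = int (Suc n div p)"
    by (simp add: div_Suc dvd_eq_mod_eq_0)
  finally show ?case .
qed

lemma PS_Suc: "PS (Suc m) = PS m \<union> (\<lambda>h. (h, Suc m)) ` {1..Suc m}"
  by (auto simp: PS_def)

lemma G_closed:
  assumes p: "prime p"
  shows "m < p^2 \<Longrightarrow> (\<Sum>x\<in>PS m. W p (fst x) (snd x)) = int (m div p) * (int p - 1 - int (m mod p))"
proof (induction m)
  case 0
  have "PS 0 = {}" by (auto simp: PS_def)
  thus ?case by simp
next
  case (Suc m)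
  have p1: "p > 1" using p prime_gt_1_nat by blast
  have disj: "PS m \<inter> (\<lambda>h. (h, Suc m)) ` {1..Suc m} = {}" by (auto simp: PS_def)
  have inj: "inj_on (\<lambda>h. (h, Suc m)) {1..Suc m}" by (auto simp: inj_on_def)
  have "(\<Sum>x\<in>PS (Suc m). W p (fst x) (snd x)) =
       (\<Sum>x\<in>PS m. W p (fst x) (snd x)) + (\<Sum>h = 1..Suc m. W p h (Suc m))"
  proof -
    have "(\<Sum>x\<in>PS m \<union> (\<lambda>h. (h, Suc m)) ` {1..Suc m}. W p (fst x) (snd x)) =
       (\<Sum>x\<in>PS m. W p (fst x) (snd x)) + (\<Sum>x\<in>(\<lambda>h. (h, Suc m)) ` {1..Suc m}. W p (fst x) (snd x))"
      by (rule sum.union_disjoint[OF finite_PS _ disj]) simp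
    also have "(\<Sum>x\<in>(\<lambda>h. (h, Suc m)) ` {1..Suc m}. W p (fst x) (snd x)) = (\<Sum>h = 1..Suc m. W p h (Suc m))"
      unfolding sum.reindex[OF inj] o_def fst_conv snd_conv ..
    finally show ?thesis unfolding PS_Suc .
  qed
  also have "(\<Sum>h = 1..Suc m. W p h (Suc m)) =
       int (Suc m) * int (multiplicity (int p) (int (Suc m))) - int (Suc m div p)"
    using Vsum[OF p Suc.prems] by (simp add: W_def sum_subtractf)
  also have "int (multiplicity (int p) (int (Suc m))) = (if p dvd Suc m then 1 else 0)"
    using mult_small[OF p _ Suc.prems] by simp
  finally have step: "(\<Sum>x\<in>PS (Suc m). W p (fst x) (snd x)) =
     int (m div p) * (int p - 1 - int (m mod p)) + (int (Suc m) * (if p dvd Suc m then 1 else 0) - int (Suc m div p))"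
    using Suc by simp
  have mp: "m = (m div p) * p + m mod p" by simp
  have mlt: "m mod p < p" using p1 by simp
  show ?case
  proof (cases "p dvd Suc m")
    case True
    hence e: "Suc (m mod p) = p" using p1 by (simp add: dvd_eq_mod_eq_0 mod_Suc split: if_splits)
    have d: "Suc m div p = Suc (m div p)" "Suc m mod p = 0"
      using True e by (simp_all add: div_Suc mod_Suc dvd_eq_mod_eq_0)
    have "int (Suc m) = (int (m div p) + 1) * int p"
      using mp e by (metis (no_types) add.commute mult_Suc of_nat_Suc of_nat_add of_nat_mult add_Suc_right)
    moreover have "int (m mod p) = int p - 1" using e by linarith
    ultimately show ?thesis unfolding step d using True
      by (simp add: algebra_simps)
  next
    case False
    have e: "Suc (m mod p) \<noteq> p" using False p1
      by (metis dvd_eq_mod_eq_0 mod_Suc)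
    have d: "Suc m div p = m div p" "Suc m mod p = Suc (m mod p)"
      using False e by (simp_all add: div_Suc mod_Suc dvd_eq_mod_eq_0)
    show ?thesis unfolding step d using False by (simp add: algebra_simps)
  qed
qed


lemma ordp_Gbar: "prime p \<Longrightarrow> ordp p (Gbar m) = (\<Sum>x\<in>PS m. W p (fst x) (snd x))"
proof -
  assume p: "prime p"
  have S: "{(h, k). 1 \<le> h \<and> h \<le> k \<and> k \<le> m} = PS m" by (simp add: PS_def)
  show ?thesis unfolding Gbar_def S
    by (subst ordp_prod[OF p finite_PS]) (auto simp: case_prod_beta PS_def)
qed

lemma ordp_Fbar: "prime p \<Longrightarrow> ordp p (Fbar m) = (\<Sum>x\<in>PS m \<inter> {x. coprime (fst x) (snd x)}. W p (fst x) (snd x))"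
proof -
  assume p: "prime p"
  have S: "{(h, k). 1 \<le> h \<and> h \<le> k \<and> k \<le> m \<and> coprime h k} = PS m \<inter> {x. coprime (fst x) (snd x)}"
    by (auto simp: PS_def)
  show ?thesis unfolding Fbar_def S
    by (subst ordp_prod[OF p]) (auto simp: finite_PS case_prod_beta PS_def intro: finite_subset[OF _ finite_PS])
qed

lemma div_key:
  fixes p k :: nat
  assumes "p \<ge> 3" "1 \<le> k" "k \<le> p - 1"
  shows "(p^2 - 1) div k div p = (p - 1) div k"
proof -
  define q where "q = (p - 1) div k"
  define r where "r = (p - 1) mod k"
  have h1: "p - 1 = q * k + r" by (simp add: q_def r_def)
  have rk: "r < k" using assms by (simp add: r_def)
  have h2: "p^2 - 1 = p * (p - 1) + (p - 1)" using assms by (cases p) (auto simp: power2_eq_square)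
  have h3: "p^2 - 1 = (p * r + (p - 1)) + q * (k * p)" unfolding h2 h1 by (simp add: algebra_simps)
  have "p * r + (p - 1) < p * (r + 1)" using assms by simp
  also have "p * (r + 1) \<le> p * k" using rk by (intro mult_le_mono2) simp
  finally have lt: "p * r + (p - 1) < k * p" by (simp add: mult.commute)
  define s where "s = p * r + (p - 1)"
  have kp: "k * p > 0" using assms by simp
  have "(p^2 - 1) div (k * p) = q"
  proof -
    have ls: "s < k * p" unfolding s_def using lt .
    have "(s + q * (k * p)) div (k * p) = s div (k * p) + q" using kp by simp
    thus ?thesis unfolding h3 s_def[symmetric] using ls by simp
  qed
  thus ?thesis by (simp add: div_mult2_eq q_def)
qed


theorem theorem4p8:
  fixes p :: nat
  assumes "prime p" and "p \<ge> 3"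
  shows "(ordp p (Fbar (p^2 - 1)) =
            (\<Sum>k = 1..p - 1. moebius k * ordp p (Gbar ((p^2 - 1) div k))))
       \<and> (\<forall>k \<in> {1..p - 1}.
            (p^2 - 1) div k = ((p - 1) div k) * p + ((p^2 - 1) div k - p * ((p - 1) div k))
          \<and> (p - 1) div k \<le> p - 1
          \<and> int ((p^2 - 1) div k) - int p * int ((p - 1) div k) \<ge> 0
          \<and> int ((p^2 - 1) div k) - int p * int ((p - 1) div k) \<le> int p - 1
          \<and> ordp p (Gbar ((p^2 - 1) div k)) =
              int ((p - 1) div k) *
              (int p - 1 - (int ((p^2 - 1) div k) - int p * int ((p - 1) div k))))
       \<and> (ordp p (Fbar (p^2 - 1)) =
            int p - 1 - (\<Sum>k = 1..p - 1. moebius k * int ((p - 1) div k) *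
               (int ((p^2 - 1) div k) - int p * int ((p - 1) div k))))"
proof -
  note p = assms(1)
  define N where "N = p^2 - 1"
  have p1: "p > 1" using assms by simp
  have Np: "N < p^2" using p1 by (simp add: N_def)
  have Np2: "N < p * p" using Np by (simp add: power2_eq_square)
  have pN: "p - 1 \<le> N" using le_square[of p] by (simp add: N_def power2_eq_square diff_le_mono)
  have K: "(N div k = ((p - 1) div k) * p + (N div k - p * ((p - 1) div k))
          \<and> (p - 1) div k \<le> p - 1
          \<and> int (N div k) - int p * int ((p - 1) div k) \<ge> 0
          \<and> int (N div k) - int p * int ((p - 1) div k) \<le> int p - 1
          \<and> ordp p (Gbar (N div k)) =
              int ((p - 1) div k) *
              (int p - 1 - (int (N div k) - int p * int ((p - 1) div k))))" if k: "k \<in> {1..p - 1}" for k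
  proof -
    define m where "m = N div k"
    have md: "m div p = (p - 1) div k" using div_key[OF assms(2), of k] k by (simp add: m_def N_def)
    have mlt: "m < p^2" using Np by (simp add: m_def le_less_trans[OF div_le_dividend])
    have dm: "m = (m div p) * p + m mod p" by simp
    have mm: "int (m mod p) = int m - int p * int ((p - 1) div k)"
      using arg_cong[OF dm, of int] md by (simp add: algebra_simps)
    have mp: "m mod p < p" using p1 by simp
    have G: "ordp p (Gbar m) = int (m div p) * (int p - 1 - int (m mod p))"
      using ordp_Gbar[OF p] G_closed[OF p mlt] by simp
    have le: "p * ((p - 1) div k) \<le> m" using dm md by (metis le_add1 mult.commute)
    have c1: "m = ((p - 1) div k) * p + (m - p * ((p - 1) div k))"
      using le by (simp add: mult.commute)
    have c2: "(p - 1) div k \<le> p - 1" by (rule div_le_dividend)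
    have c3: "int m - int p * int ((p - 1) div k) \<ge> 0" unfolding mm[symmetric] by simp
    have c4: "int m - int p * int ((p - 1) div k) \<le> int p - 1" unfolding mm[symmetric] using mp by linarith
    have c5: "ordp p (Gbar m) = int ((p - 1) div k) * (int p - 1 - (int m - int p * int ((p - 1) div k)))"
      unfolding G md mm ..
    show ?thesis unfolding m_def[symmetric] using c1 c2 c3 c4 c5 by blast
  qed
  have Z: "moebius d * ordp p (Gbar (N div d)) = 0" if d: "d \<in> {p..N}" for d
  proof -
    have "N div d < p" using d Np2 p1
      by (simp add: div_less_iff_less_mult) (meson less_le_trans mult_le_mono2)
    hence "N div d div p = 0" by simp
    thus ?thesis using ordp_Gbar[OF p] G_closed[OF p, of "N div d"] Np
      by (simp add: le_less_trans[OF div_le_dividend])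
  qed
  have P1: "ordp p (Fbar N) = (\<Sum>k = 1..p - 1. moebius k * ordp p (Gbar (N div k)))"
  proof -
    have "ordp p (Fbar N) = (\<Sum>d = 1..N. moebius d * ordp p (Gbar (N div d)))"
      using ordp_Fbar[OF p] inversion[OF p] ordp_Gbar[OF p] by simp
    also have "{1..N} = {1..p - 1} \<union> {p..N}" using p1 pN by auto
    also have "(\<Sum>d \<in> {1..p - 1} \<union> {p..N}. moebius d * ordp p (Gbar (N div d))) =
        (\<Sum>d = 1..p - 1. moebius d * ordp p (Gbar (N div d))) + (\<Sum>d = p..N. moebius d * ordp p (Gbar (N div d)))"
      by (rule sum.union_disjoint) auto
    also have "(\<Sum>d = p..N. moebius d * ordp p (Gbar (N div d))) = 0"
      using Z by (intro sum.neutral) auto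
    finally show ?thesis by simp
  qed
  have P3: "ordp p (Fbar N) = int p - 1 - (\<Sum>k = 1..p - 1. moebius k * int ((p - 1) div k) *
               (int (N div k) - int p * int ((p - 1) div k)))"
  proof -
    have "ordp p (Fbar N) = (\<Sum>k = 1..p - 1. (int p - 1) * (moebius k * int ((p - 1) div k)) -
        moebius k * int ((p - 1) div k) * (int (N div k) - int p * int ((p - 1) div k)))"
      unfolding P1
    proof (intro sum.cong refl)
      fix k assume "k \<in> {1..p - 1}"
      hence hG: "ordp p (Gbar (N div k)) = int ((p - 1) div k) *
              (int p - 1 - (int (N div k) - int p * int ((p - 1) div k)))" using K by blast
      show "moebius k * ordp p (Gbar (N div k)) = (int p - 1) * (moebius k * int ((p - 1) div k)) -
        moebius k * int ((p - 1) div k) * (int (N div k) - int p * int ((p - 1) div k))"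
        unfolding hG by (simp add: algebra_simps)
    qed
    also have "\<dots> = (int p - 1) * (\<Sum>k = 1..p - 1. moebius k * int ((p - 1) div k)) -
        (\<Sum>k = 1..p - 1. moebius k * int ((p - 1) div k) * (int (N div k) - int p * int ((p - 1) div k)))"
      by (simp add: sum_subtractf sum_distrib_left)
    also have "(\<Sum>k = 1..p - 1. moebius k * int ((p - 1) div k)) = 1"
      using moebius_floor_sum[of "p - 1"] p1 by simp
    finally show ?thesis by simp
  qed
  show ?thesis using P1 P3 K unfolding N_def by blast
qed

end
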